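(* Let $r \in \mathbb{T}$ (the unit circle) and let $\varphi_r:\mathbb{D}\to\mathbb{D}$ be given by $\varphi_r(z)=rz$. Let $C_{\varphi_r}f = f\circ\varphi_r$. Then: (1) $\sigma_{pt}(C_{\varphi_r}, H(\mathbb{D})) = \{ r^n : n=0,1,2,\dots\}$. (2) $\sigma^*(C_{\varphi_r}, H(\mathbb{D})) \subseteq \mathbb{T}$, and also $\sigma^*(C_{\varphi_r}, H_0(\mathbb{D})) \subseteq \mathbb{T}$. (3) If $r$ is a root of unity and $m$ is the least positive integer with $r^m=1$, then $\sigma(C_{\varphi_r}, H(\mathbb{D})) = \sigma^*(C_{\varphi_r}, H(\mathbb{D})) = \sigma_{pt}(C_{\varphi_r}, H(\mathbb{D})) = \{1,r,r^2,\dots,r^{m-1}\}$, and $\ker(C_{\varphi_r}-r^jI)$ is infinite dimensional for each $j=0,\dots,m-1$. The same statements hold with $H_0(\mathbb{D})$ in place of $H(\mathbb{D})$. (4) If $r$ is not a root of unity, then $\sigma_{pt}(C_{\varphi_r}, H_0(\mathbb{D})) = \{ r^n : n=1,2,\dots\}$ and $\overline{\sigma(C_{\varphi_r}, H_0(\mathbb{D}))} = \sigma^*(C_{\varphi_r}, H_0(\mathbb{D})) = \mathbb{T}$; moreover $\sigma^*(C_{\varphi_r}, H(\mathbb{D})) = \mathbb{T}$.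
   Context: $\mathbb{D}$ is the open unit disc and $\mathbb{T}$ the unit circle. $H(\mathbb{D})$ is the space of all analytic functions on $\mathbb{D}$ with the Fréchet topology of uniform convergence on compact subsets; $H_0(\mathbb{D})=\{f\in H(\mathbb{D}): f(0)=0\}$ with the induced topology (it is invariant under $C_{\varphi_r}$). For a continuous linear operator $T$ on a Fréchet space $X$: the resolvent set $\rho(T;X)$ is the set of $\lambda\in\mathbb{C}$ such that $\lambda I - T$ is bijective with continuous inverse $R(\lambda,T)=(\lambda I-T)^{-1}$; the spectrum is $\sigma(T;X)=\mathbb{C}\setminus\rho(T;X)$; the point spectrum $\sigma_{pt}(T;X)$ is the set of $\lambda$ with $\lambda I-T$ not injective. $\rho^*(T;X)$ is the set of $\lambda\in\mathbb{C}$ for which there is $\delta>0$ with $\{z:|z-\lambda|<\delta\}\subseteq\rho(T;X)$ and $\{R(\mu,T): |\mu-\lambda|<\delta\}$ equicontinuous; the Waelbroeck spectrum is $\sigma^*(T;X)=\mathbb{C}\setminus\rho^*(T;X)$. *)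

theory Defs
  imports "HOL-Analysis.Analysis"
begin

text \<open>Elements of H(D) are represented by functions complex => complex that are
holomorphic on the open unit disc and (as a normalisation making the representation
unique) vanish outside the disc.\<close>

definition hol_disc :: "(complex \<Rightarrow> complex) set" where
  "hol_disc = {f. f holomorphic_on ball 0 1 \<and> (\<forall>z. z \<notin> ball 0 1 \<longrightarrow> f z = 0)}"

definition hol0_disc :: "(complex \<Rightarrow> complex) set" where
  "hol0_disc = {f \<in> hol_disc. f 0 = 0}"

definition comp_rot :: "complex \<Rightarrow> (complex \<Rightarrow> complex) \<Rightarrow> (complex \<Rightarrow> complex)" where
  "comp_rot r f = (\<lambda>z. if z \<in> ball 0 1 then f (r * z) else 0)"

text \<open>Fundamental system of seminorms for the topology of uniform convergence on
compact subsets of the disc: sup over the closed discs of radius rho < 1.\<close>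
definition sup_on :: "real \<Rightarrow> (complex \<Rightarrow> complex) \<Rightarrow> real" where
  "sup_on \<rho> f = (SUP z\<in>cball 0 \<rho>. norm (f z))"

definition cont_op :: "(complex \<Rightarrow> complex) set \<Rightarrow> ((complex \<Rightarrow> complex) \<Rightarrow> (complex \<Rightarrow> complex)) \<Rightarrow> bool" where
  "cont_op X T \<longleftrightarrow> (\<forall>\<rho>\<in>{0<..<1}. \<exists>\<rho>'\<in>{0<..<1}. \<exists>C. \<forall>f\<in>X. sup_on \<rho> (T f) \<le> C * sup_on \<rho>' f)"

definition equicont_ops :: "(complex \<Rightarrow> complex) set \<Rightarrow> ((complex \<Rightarrow> complex) \<Rightarrow> (complex \<Rightarrow> complex)) set \<Rightarrow> bool" where
  "equicont_ops X Ts \<longleftrightarrow> (\<forall>\<rho>\<in>{0<..<1}. \<exists>\<rho>'\<in>{0<..<1}. \<exists>C. \<forall>T\<in>Ts. \<forall>f\<in>X. sup_on \<rho> (T f) \<le> C * sup_on \<rho>' f)"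

definition shift_op :: "complex \<Rightarrow> ((complex \<Rightarrow> complex) \<Rightarrow> (complex \<Rightarrow> complex)) \<Rightarrow> (complex \<Rightarrow> complex) \<Rightarrow> (complex \<Rightarrow> complex)" where
  "shift_op l T f = (\<lambda>z. l * f z - T f z)"

definition resolvent_op where
  "resolvent_op X T l = inv_into X (shift_op l T)"

definition resolvent_set :: "(complex \<Rightarrow> complex) set \<Rightarrow> ((complex \<Rightarrow> complex) \<Rightarrow> (complex \<Rightarrow> complex)) \<Rightarrow> complex set" where
  "resolvent_set X T = {l. bij_betw (shift_op l T) X X \<and> cont_op X (resolvent_op X T l)}"

definition spec :: "(complex \<Rightarrow> complex) set \<Rightarrow> ((complex \<Rightarrow> complex) \<Rightarrow> (complex \<Rightarrow> complex)) \<Rightarrow> complex set" where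
  "spec X T = UNIV - resolvent_set X T"

definition point_spec :: "(complex \<Rightarrow> complex) set \<Rightarrow> ((complex \<Rightarrow> complex) \<Rightarrow> (complex \<Rightarrow> complex)) \<Rightarrow> complex set" where
  "point_spec X T = {l. \<not> inj_on (shift_op l T) X}"

definition resolvent_star :: "(complex \<Rightarrow> complex) set \<Rightarrow> ((complex \<Rightarrow> complex) \<Rightarrow> (complex \<Rightarrow> complex)) \<Rightarrow> complex set" where
  "resolvent_star X T = {l. \<exists>\<delta>>0. ball l \<delta> \<subseteq> resolvent_set X T \<and>
      equicont_ops X (resolvent_op X T ` ball l \<delta>)}"

definition waelbroeck_spec :: "(complex \<Rightarrow> complex) set \<Rightarrow> ((complex \<Rightarrow> complex) \<Rightarrow> (complex \<Rightarrow> complex)) \<Rightarrow> complex set" where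
  "waelbroeck_spec X T = UNIV - resolvent_star X T"

definition kernel_of :: "(complex \<Rightarrow> complex) set \<Rightarrow> ((complex \<Rightarrow> complex) \<Rightarrow> (complex \<Rightarrow> complex)) \<Rightarrow> (complex \<Rightarrow> complex) set" where
  "kernel_of X S = {f \<in> X. S f = (\<lambda>z. 0)}"

definition infinite_dimensional :: "(complex \<Rightarrow> complex) set \<Rightarrow> bool" where
  "infinite_dimensional K \<longleftrightarrow> (\<forall>n. \<exists>fs :: nat \<Rightarrow> complex \<Rightarrow> complex.
      (\<forall>i<n. fs i \<in> K) \<and>
      (\<forall>c :: nat \<Rightarrow> complex. (\<lambda>z. \<Sum>i<n. c i * fs i z) = (\<lambda>z. 0) \<longrightarrow> (\<forall>i<n. c i = 0)))"

end

theory Submission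
  imports Defs "HOL-Complex_Analysis.Complex_Analysis" "HOL-Computational_Algebra.Polynomial"
begin

lemma hol_discD: "f \<in> hol_disc \<Longrightarrow> f holomorphic_on ball 0 1"
  "f \<in> hol_disc \<Longrightarrow> z \<notin> ball 0 1 \<Longrightarrow> f z = 0"
  by (auto simp: hol_disc_def)

lemma hol0_sub: "hol0_disc \<subseteq> hol_disc"
  by (auto simp: hol0_disc_def)

lemma rot_in_ball: "norm (s::complex) = 1 \<Longrightarrow> z \<in> ball 0 1 \<Longrightarrow> s * z \<in> ball 0 1"
  by (simp add: norm_mult)

lemma comp_rot_hol:
  assumes "norm s = 1" "f \<in> hol_disc"
  shows "comp_rot s f \<in> hol_disc"
proof -
  have "(\<lambda>z. f (s * z)) holomorphic_on ball 0 1"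
  proof (rule holomorphic_on_compose_gen[where g=f and f="\<lambda>z. s*z" and t="ball 0 1", unfolded o_def])
    show "(*) s holomorphic_on ball 0 1" by (intro holomorphic_intros)
    show "f holomorphic_on ball 0 1" using assms hol_discD by auto
    show "(*) s ` ball 0 1 \<subseteq> ball 0 1" using rot_in_ball[OF assms(1)] by auto
  qed
  then have "comp_rot s f holomorphic_on ball 0 1"
    by (rule holomorphic_transform) (simp add: comp_rot_def)
  then show ?thesis by (simp add: hol_disc_def comp_rot_def)
qed

lemma comp_rot_hol0:
  assumes "norm s = 1" "f \<in> hol0_disc"
  shows "comp_rot s f \<in> hol0_disc"
  using comp_rot_hol[OF assms(1)] assms(2) by (auto simp: hol0_disc_def comp_rot_def)

lemma hol_disc_diff: "f \<in> hol_disc \<Longrightarrow> g \<in> hol_disc \<Longrightarrow> (\<lambda>z. f z - g z) \<in> hol_disc"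
  by (auto simp: hol_disc_def intro: holomorphic_intros)

lemma hol0_disc_diff: "f \<in> hol0_disc \<Longrightarrow> g \<in> hol0_disc \<Longrightarrow> (\<lambda>z. f z - g z) \<in> hol0_disc"
  by (auto simp: hol0_disc_def hol_disc_diff)

lemma hol_disc_zero: "(\<lambda>z. 0) \<in> hol_disc" "(\<lambda>z. 0) \<in> hol0_disc"
  by (auto simp: hol0_disc_def hol_disc_def)

lemma shift_hol:
  assumes "norm r = 1" "f \<in> hol_disc"
  shows "shift_op l (comp_rot r) f \<in> hol_disc"
proof -
  have "(\<lambda>z. l * f z) \<in> hol_disc" using assms(2) by (auto simp: hol_disc_def intro: holomorphic_intros)
  from hol_disc_diff[OF this comp_rot_hol[OF assms]] show ?thesis by (simp add: shift_op_def)
qed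

lemma shift_hol0:
  assumes "norm r = 1" "f \<in> hol0_disc"
  shows "shift_op l (comp_rot r) f \<in> hol0_disc"
  using shift_hol[OF assms(1), of f l] assms(2)
  by (auto simp: hol0_disc_def shift_op_def comp_rot_def)

lemma shift_diff: "shift_op l (comp_rot r) (\<lambda>z. f z - g z) = (\<lambda>z. shift_op l (comp_rot r) f z - shift_op l (comp_rot r) g z)"
  by (auto simp: shift_op_def comp_rot_def algebra_simps)

lemma point_spec_iff:
  assumes X: "X = hol_disc \<or> X = hol0_disc" and r: "norm r = 1"
  shows "l \<in> point_spec X (comp_rot r) \<longleftrightarrow> (\<exists>f\<in>X. f \<noteq> (\<lambda>z. 0) \<and> shift_op l (comp_rot r) f = (\<lambda>z. 0))"
proof
  assume "l \<in> point_spec X (comp_rot r)"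
  then obtain f g where fg: "f \<in> X" "g \<in> X" "f \<noteq> g" "shift_op l (comp_rot r) f = shift_op l (comp_rot r) g"
    by (auto simp: point_spec_def inj_on_def)
  have "(\<lambda>z. f z - g z) \<in> X" using X fg hol_disc_diff hol0_disc_diff by auto
  moreover have "(\<lambda>z. f z - g z) \<noteq> (\<lambda>z. 0)" using fg(3) by (auto simp: fun_eq_iff)
  moreover have "shift_op l (comp_rot r) (\<lambda>z. f z - g z) = (\<lambda>z. 0)"
    unfolding shift_diff fg(4) by simp
  ultimately show "\<exists>f\<in>X. f \<noteq> (\<lambda>z. 0) \<and> shift_op l (comp_rot r) f = (\<lambda>z. 0)" by blast
next
  assume "\<exists>f\<in>X. f \<noteq> (\<lambda>z. 0) \<and> shift_op l (comp_rot r) f = (\<lambda>z. 0)"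
  then obtain f where f: "f \<in> X" "f \<noteq> (\<lambda>z. 0)" "shift_op l (comp_rot r) f = (\<lambda>z. 0)" by blast
  have z0: "shift_op l (comp_rot r) (\<lambda>z. 0) = (\<lambda>z. 0)" by (simp add: shift_op_def comp_rot_def)
  have zX: "(\<lambda>z. 0) \<in> X" using hol_disc_zero X by auto
  have "\<not> inj_on (shift_op l (comp_rot r)) X"
  proof
    assume "inj_on (shift_op l (comp_rot r)) X"
    from inj_onD[OF this _ f(1) zX] have "f = (\<lambda>z. 0)" using f(3) z0 by simp
    with f(2) show False by simp
  qed
  then show "l \<in> point_spec X (comp_rot r)" by (simp add: point_spec_def)
qed

lemma eigen_value:
  assumes r: "norm r = 1" and f: "f \<in> hol_disc" "f \<noteq> (\<lambda>z. 0)"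
    and e: "shift_op l (comp_rot r) f = (\<lambda>z. 0)"
  shows "\<exists>n. l = r ^ n \<and> (f 0 = 0 \<longrightarrow> n \<ge> 1)"
proof -
  have hf: "f holomorphic_on ball 0 1" using f hol_discD by auto
  obtain w where w: "f w \<noteq> 0" using f(2) by auto
  then have wb: "w \<in> ball 0 1" using f hol_discD(2) by blast
  obtain n where n: "(deriv ^^ n) f 0 \<noteq> 0"
    using holomorphic_fun_eq_0_on_ball[OF hf wb] w by blast
  have eq: "f (r * z) = l * f z" if "z \<in> ball 0 1" for z
    using fun_cong[OF e, of z] that by (simp add: shift_op_def comp_rot_def)
  have hfr: "(\<lambda>z. f (r * z)) holomorphic_on ball 0 1"
    using comp_rot_hol[OF r f(1)] hol_discD(1)
    by (rule_tac holomorphic_transform[of "comp_rot r f"]) (auto simp: comp_rot_def)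
  have "(deriv ^^ n) (\<lambda>z. f (r * z)) 0 = (deriv ^^ n) (\<lambda>z. l * f z) 0"
    by (rule higher_deriv_transform_within_open[OF hfr _ open_ball])
       (auto intro: holomorphic_intros hf simp: eq)
  also have "\<dots> = l * (deriv ^^ n) f 0"
    by (rule higher_deriv_cmult[OF hf]) auto
  finally have "(deriv ^^ n) (\<lambda>z. f (r * z)) 0 = l * (deriv ^^ n) f 0" .
  moreover have "(deriv ^^ n) (\<lambda>z. f (r * z)) 0 = r ^ n * (deriv ^^ n) f (r * 0)"
    by (rule higher_deriv_compose_linear[OF hf open_ball[of 0 1] open_ball[of 0 1]]) (auto simp: r norm_mult)
  ultimately have "r ^ n * (deriv ^^ n) f 0 = l * (deriv ^^ n) f 0" by simp
  then have "l = r ^ n" using n by simp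
  moreover have "f 0 = 0 \<longrightarrow> n \<ge> 1" using n by (cases n) auto
  ultimately show ?thesis by blast
qed

definition mono_fn :: "nat \<Rightarrow> complex \<Rightarrow> complex" where
  "mono_fn n = (\<lambda>z. if z \<in> ball 0 1 then z ^ n else 0)"

lemma mono_fn_hol: "mono_fn n \<in> hol_disc"
proof -
  have "mono_fn n holomorphic_on ball 0 1"
    by (rule holomorphic_transform[of "\<lambda>z. z ^ n"]) (auto simp: mono_fn_def intro: holomorphic_intros)
  then show ?thesis by (simp add: hol_disc_def mono_fn_def)
qed

lemma mono_fn_hol0: "n \<ge> 1 \<Longrightarrow> mono_fn n \<in> hol0_disc"
  using mono_fn_hol by (auto simp: hol0_disc_def mono_fn_def)

lemma mono_fn_nz: "mono_fn n \<noteq> (\<lambda>z. 0)"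
proof
  assume "mono_fn n = (\<lambda>z. 0)"
  from fun_cong[OF this, of "1/2"] show False by (simp add: mono_fn_def)
qed

lemma mono_fn_eigen:
  assumes r: "norm r = 1" and "r ^ n = l"
  shows "shift_op l (comp_rot r) (mono_fn n) = (\<lambda>z. 0)"
  using assms rot_in_ball[OF r]
  by (auto simp: shift_op_def comp_rot_def mono_fn_def power_mult_distrib)

lemma sup_on_ge:
  assumes f: "f \<in> hol_disc" and "\<rho> < 1" and z: "z \<in> cball 0 \<rho>"
  shows "norm (f z) \<le> sup_on \<rho> f"
proof -
  have sub: "cball 0 \<rho> \<subseteq> ball 0 1" using assms(2) by auto
  have "compact (f ` cball 0 \<rho>)"
    by (intro compact_continuous_image continuous_on_subset[OF holomorphic_on_imp_continuous_on[OF hol_discD(1)[OF f]] sub]) auto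
  then have "bounded (f ` cball 0 \<rho>)" by (rule compact_imp_bounded)
  then obtain B where B: "\<forall>x\<in>f ` cball 0 \<rho>. norm x \<le> B"
    unfolding bounded_iff by blast
  have "bdd_above ((\<lambda>z. norm (f z)) ` cball 0 \<rho>)"
    using B by (intro bdd_aboveI2[of _ _ B]) auto
  then show ?thesis unfolding sup_on_def using z by (rule cSUP_upper2) simp
qed

lemma sup_on_le:
  assumes "\<rho> \<ge> 0" "\<And>z. z \<in> cball 0 \<rho> \<Longrightarrow> norm (h z) \<le> B"
  shows "sup_on \<rho> h \<le> B"
  unfolding sup_on_def using assms by (intro cSUP_least) auto

lemma sup_on_nonneg:
  assumes "f \<in> hol_disc" "\<rho> < 1" "\<rho> \<ge> 0"
  shows "0 \<le> sup_on \<rho> f"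
  using sup_on_ge[OF assms(1,2), of 0] assms(3) by (simp add: order_trans[OF norm_ge_zero])

lemma rstarI:
  assumes d: "\<delta> > 0"
    and inj: "\<And>l'. l' \<in> ball l \<delta> \<Longrightarrow> inj_on (shift_op l' T) X"
    and maps: "\<And>l' f. f \<in> X \<Longrightarrow> shift_op l' T f \<in> X"
    and surj: "\<And>l' g. l' \<in> ball l \<delta> \<Longrightarrow> g \<in> X \<Longrightarrow>
       \<exists>h\<in>X. shift_op l' T h = g \<and> (\<forall>\<rho>\<in>{0<..<1}. sup_on \<rho> h \<le> K * sup_on \<rho> g)"
  shows "l \<in> resolvent_star X T"
proof -
  have key: "\<forall>\<rho>\<in>{0<..<1}. sup_on \<rho> (resolvent_op X T l' g) \<le> K * sup_on \<rho> g"
    if lg: "l' \<in> ball l \<delta>" "g \<in> X" for l' g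
  proof -
    obtain h where h: "h \<in> X" "shift_op l' T h = g" "\<forall>\<rho>\<in>{0<..<1}. sup_on \<rho> h \<le> K * sup_on \<rho> g"
      using surj[OF lg] by blast
    have "resolvent_op X T l' g = h"
      unfolding resolvent_op_def h(2)[symmetric] by (rule inv_into_f_f[OF inj[OF lg(1)] h(1)])
    then show ?thesis using h(3) by simp
  qed
  have rs: "ball l \<delta> \<subseteq> resolvent_set X T"
  proof
    fix l' assume l': "l' \<in> ball l \<delta>"
    have "shift_op l' T ` X = X"
    proof
      show "shift_op l' T ` X \<subseteq> X" using maps by auto
      show "X \<subseteq> shift_op l' T ` X"
      proof
        fix g assume "g \<in> X"
        then obtain h where "h \<in> X" "shift_op l' T h = g" using surj[OF l'] by blast
        then show "g \<in> shift_op l' T ` X" by blast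
      qed
    qed
    then have "bij_betw (shift_op l' T) X X" using inj[OF l'] by (simp add: bij_betw_def)
    moreover have "cont_op X (resolvent_op X T l')"
      unfolding cont_op_def using key[OF l'] by blast
    ultimately show "l' \<in> resolvent_set X T" by (simp add: resolvent_set_def)
  qed
  have "equicont_ops X (resolvent_op X T ` ball l \<delta>)"
    unfolding equicont_ops_def using key by blast
  then show ?thesis unfolding resolvent_star_def using rs d by blast
qed

lemma rot_holo:
  assumes "norm s = 1" "g \<in> hol_disc"
  shows "(\<lambda>z. g (s * z)) holomorphic_on ball 0 1"
  using comp_rot_hol[OF assms] hol_discD(1)
  by (rule_tac holomorphic_transform[of "comp_rot s g"]) (auto simp: comp_rot_def)

lemma rot_bound:
  assumes "norm s = 1" "g \<in> hol_disc" "\<rho> < 1" "z \<in> cball 0 \<rho>"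
  shows "norm (g (s * z)) \<le> sup_on \<rho> g"
  using assms by (intro sup_on_ge) (auto simp: norm_mult)

lemma XD: "X = hol_disc \<or> X = hol0_disc \<Longrightarrow> f \<in> X \<Longrightarrow> f \<in> hol_disc"
  using hol0_sub by auto

lemma inj_shift:
  assumes X: "X = hol_disc \<or> X = hol0_disc" and r: "norm r = 1" and l: "\<And>n. l \<noteq> r ^ n"
  shows "inj_on (shift_op l (comp_rot r)) X"
proof (rule ccontr)
  assume "\<not> inj_on (shift_op l (comp_rot r)) X"
  then have "l \<in> point_spec X (comp_rot r)" by (simp add: point_spec_def)
  then obtain f where "f \<in> X" "f \<noteq> (\<lambda>z. 0)" "shift_op l (comp_rot r) f = (\<lambda>z. 0)"
    using point_spec_iff[OF X r] by blast
  then show False using eigen_value[OF r XD[OF X]] l by blast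
qed

lemma shift_X: "X = hol_disc \<or> X = hol0_disc \<Longrightarrow> norm r = 1 \<Longrightarrow> f \<in> X \<Longrightarrow> shift_op l (comp_rot r) f \<in> X"
  using shift_hol shift_hol0 by blast

lemma rstar_root:
  assumes X: "X = hol_disc \<or> X = hol0_disc" and r: "norm r = 1" and rm: "r ^ m = 1"
    and lm: "l ^ m \<noteq> 1"
  shows "l \<in> resolvent_star X (comp_rot r)"
proof -
  define c where "c = norm (l ^ m - 1) / 2"
  have c: "c > 0" using lm by (simp add: c_def)
  have "continuous (at l) (\<lambda>x::complex. x ^ m)" by (intro continuous_intros)
  then obtain d where d: "d > 0" "\<And>x. dist x l < d \<Longrightarrow> dist (x ^ m) (l ^ m) < c"
    using c unfolding continuous_at_eps_delta by blast
  define \<delta> where "\<delta> = min d 1"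
  define K where "K = real m * (norm l + 1) ^ m / c"
  have lb: "norm l' \<le> norm l + 1" "norm (l' ^ m - 1) \<ge> c" if "l' \<in> ball l \<delta>" for l'
  proof -
    have "dist l' l < 1" "dist l' l < d" using that by (auto simp: \<delta>_def dist_commute)
    then show "norm l' \<le> norm l + 1" using norm_triangle_ineq2[of l' l] by (simp add: dist_norm)
    have "norm (l' ^ m - l ^ m) < c" using d(2)[OF \<open>dist l' l < d\<close>] by (simp add: dist_norm)
    moreover have "norm (l ^ m - 1) \<le> norm (l' ^ m - 1) + norm (l' ^ m - l ^ m)"
      using norm_triangle_ineq[of "l' ^ m - 1" "l ^ m - l' ^ m"] norm_minus_commute[of "l' ^ m" "l ^ m"]
      by simp
    ultimately show "norm (l' ^ m - 1) \<ge> c" by (simp add: c_def)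
  qed
  show ?thesis
  proof (rule rstarI[where \<delta>=\<delta> and K=K])
    show "\<delta> > 0" using d by (simp add: \<delta>_def)
    fix l' assume l': "l' \<in> ball l \<delta>"
    have ne: "l' ^ m \<noteq> 1" using lb(2)[OF l'] c by auto
    show "inj_on (shift_op l' (comp_rot r)) X"
    proof (rule inj_shift[OF X r])
      fix n show "l' \<noteq> r ^ n"
      proof
        assume "l' = r ^ n"
        then have "l' ^ m = (r ^ m) ^ n" by (simp add: power_mult[symmetric] mult.commute)
        then show False using ne rm by simp
      qed
    qed
    fix g assume g: "g \<in> X"
    have gh: "g \<in> hol_disc" using XD[OF X g] .
    define h where "h = (\<lambda>z. if z \<in> ball 0 1 then (\<Sum>k<m. l' ^ (m - 1 - k) * g (r ^ k * z)) / (l' ^ m - 1) else 0)"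
    have rk: "norm (r ^ k) = 1" for k using r by (simp add: norm_power)
    have hh: "h \<in> hol_disc"
    proof -
      have "(\<lambda>z. (\<Sum>k<m. l' ^ (m - 1 - k) * g (r ^ k * z)) / (l' ^ m - 1)) holomorphic_on ball 0 1"
        by (intro holomorphic_intros rot_holo[OF rk gh] ne) (use ne in auto)
      then have "h holomorphic_on ball 0 1" by (rule holomorphic_transform) (simp add: h_def)
      then show ?thesis by (simp add: hol_disc_def h_def)
    qed
    have "h \<in> X"
    proof (cases "X = hol_disc")
      case True then show ?thesis using hh by simp
    next
      case False
      then have "X = hol0_disc" using X by blast
      then show ?thesis using hh g by (simp add: hol0_disc_def h_def)
    qed
    moreover have "shift_op l' (comp_rot r) h = g"
    proof
      fix z
      show "shift_op l' (comp_rot r) h z = g z"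
      proof (cases "z \<in> ball 0 1")
        case False
        then show ?thesis using hol_discD(2)[OF gh False] by (simp add: shift_op_def comp_rot_def h_def)
      next
        case True
        have rz: "r * z \<in> ball 0 1" using rot_in_ball[OF r True] .
        define a where "a = (\<lambda>k. l' ^ (m - k) * g (r ^ k * z))"
        have s1: "l' * (\<Sum>k<m. l' ^ (m - 1 - k) * g (r ^ k * z)) = (\<Sum>k<m. a k)"
          unfolding sum_distrib_left a_def
          by (intro sum.cong refl) (auto simp: power_Suc[symmetric] Suc_diff_Suc mult.assoc)
        have s2: "(\<Sum>k<m. l' ^ (m - 1 - k) * g (r ^ k * (r * z))) = (\<Sum>k<m. a (Suc k))"
          unfolding a_def by (intro sum.cong refl) (auto simp: mult.assoc mult.commute mult.left_commute)
        have "(\<Sum>k<m. a k) - (\<Sum>k<m. a (Suc k)) = a 0 - a m"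
          using sum_lessThan_telescope'[of a m] by (simp add: sum_subtractf)
        also have "\<dots> = (l' ^ m - 1) * g z" using rm by (simp add: a_def algebra_simps)
        finally have tel: "(\<Sum>k<m. a k) - (\<Sum>k<m. a (Suc k)) = (l' ^ m - 1) * g z" .
        have "shift_op l' (comp_rot r) h z = (l' * (\<Sum>k<m. l' ^ (m - 1 - k) * g (r ^ k * z)) - (\<Sum>k<m. l' ^ (m - 1 - k) * g (r ^ k * (r * z)))) / (l' ^ m - 1)"
          using True rz ne by (simp add: shift_op_def comp_rot_def h_def diff_divide_distrib)
        also have "\<dots> = g z" unfolding s1 s2 tel using ne by simp
        finally show ?thesis .
      qed
    qed
    moreover have "\<forall>\<rho>\<in>{0<..<1}. sup_on \<rho> h \<le> K * sup_on \<rho> g"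
    proof
      fix \<rho> :: real assume \<rho>: "\<rho> \<in> {0<..<1}"
      have S0: "0 \<le> sup_on \<rho> g" using sup_on_nonneg[OF gh] \<rho> by auto
      show "sup_on \<rho> h \<le> K * sup_on \<rho> g"
      proof (rule sup_on_le)
        show "0 \<le> \<rho>" using \<rho> by simp
        fix z :: complex assume z: "z \<in> cball 0 \<rho>"
        then have zb: "z \<in> ball 0 1" using \<rho> by auto
        have "norm (\<Sum>k<m. l' ^ (m - 1 - k) * g (r ^ k * z)) \<le> (\<Sum>k<m. (norm l + 1) ^ m * sup_on \<rho> g)"
        proof (rule order_trans[OF norm_sum sum_mono])
          fix k assume "k \<in> {..<m}"
          have "norm l' ^ (m - 1 - k) \<le> (norm l + 1) ^ (m - 1 - k)"
            by (rule power_mono[OF lb(1)[OF l']]) simp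
          also have "\<dots> \<le> (norm l + 1) ^ m" by (rule power_increasing) auto
          finally have A: "norm l' ^ (m - 1 - k) \<le> (norm l + 1) ^ m" .
          have B: "norm (g (r ^ k * z)) \<le> sup_on \<rho> g" using rot_bound[OF rk gh _ z] \<rho> by auto
          show "norm (l' ^ (m - 1 - k) * g (r ^ k * z)) \<le> (norm l + 1) ^ m * sup_on \<rho> g"
            unfolding norm_mult norm_power by (rule mult_mono[OF A B]) auto
        qed
        also have "\<dots> = real m * (norm l + 1) ^ m * sup_on \<rho> g" by simp
        finally have num: "norm (\<Sum>k<m. l' ^ (m - 1 - k) * g (r ^ k * z)) \<le> real m * (norm l + 1) ^ m * sup_on \<rho> g" .
        have "norm (h z) = norm (\<Sum>k<m. l' ^ (m - 1 - k) * g (r ^ k * z)) / norm (l' ^ m - 1)"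
          using zb by (simp add: h_def norm_divide)
        also have "\<dots> \<le> real m * (norm l + 1) ^ m * sup_on \<rho> g / c"
          by (rule frac_le[OF _ num c lb(2)[OF l']]) (use S0 in auto)
        also have "\<dots> = K * sup_on \<rho> g" by (simp add: K_def)
        finally show "norm (h z) \<le> K * sup_on \<rho> g" .
      qed
    qed
    ultimately show "\<exists>h\<in>X. shift_op l' (comp_rot r) h = g \<and> (\<forall>\<rho>\<in>{0<..<1}. sup_on \<rho> h \<le> K * sup_on \<rho> g)"
      by blast
  next
    fix l' f assume "f \<in> X" then show "shift_op l' (comp_rot r) f \<in> X" using shift_X[OF X r] by blast
  qed
qed

definition neu :: "complex \<Rightarrow> complex \<Rightarrow> (complex \<Rightarrow> complex) \<Rightarrow> complex \<Rightarrow> complex" where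
  "neu \<mu> s g = (\<lambda>z. if z \<in> ball 0 1 then (\<Sum>k. \<mu> ^ k * g (s ^ k * z)) else 0)"

lemma neu_term_bound:
  assumes s: "norm s = 1" and g: "g \<in> hol_disc" and "\<rho> < 1" "z \<in> cball 0 \<rho>"
  shows "norm (\<mu> ^ k * g (s ^ k * z)) \<le> norm \<mu> ^ k * sup_on \<rho> g"
proof -
  have "norm (s ^ k) = 1" using s by (simp add: norm_power)
  from rot_bound[OF this g assms(3,4)] show ?thesis
    unfolding norm_mult norm_power by (intro mult_left_mono) auto
qed

lemma neu_summable:
  assumes s: "norm s = 1" and g: "g \<in> hol_disc" and mu: "norm \<mu> < 1" and z: "z \<in> ball 0 1"
  shows "summable (\<lambda>k. \<mu> ^ k * g (s ^ k * z))"
    "summable (\<lambda>k. norm (\<mu> ^ k * g (s ^ k * z)))"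
proof -
  have z': "z \<in> cball 0 (norm z)" "norm z < 1" using z by auto
  have "summable (\<lambda>k. norm \<mu> ^ k * sup_on (norm z) g)"
    by (intro summable_mult2 summable_geometric) (use mu in auto)
  then show "summable (\<lambda>k. norm (\<mu> ^ k * g (s ^ k * z)))"
    by (rule summable_comparison_test'[where N=0]) (use neu_term_bound[OF s g z'(2) z'(1)] in auto)
  then show "summable (\<lambda>k. \<mu> ^ k * g (s ^ k * z))" by (rule summable_norm_cancel)
qed

lemma neu_rec:
  assumes s: "norm s = 1" and g: "g \<in> hol_disc" and mu: "norm \<mu> < 1" and z: "z \<in> ball 0 1"
  shows "neu \<mu> s g z = g z + \<mu> * neu \<mu> s g (s * z)"
proof -
  have sz: "s * z \<in> ball 0 1" using rot_in_ball[OF s z] .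
  have "(\<Sum>k. \<mu> ^ Suc k * g (s ^ Suc k * z)) = (\<Sum>k. \<mu> ^ k * g (s ^ k * z)) - g z"
    using suminf_split_head[OF neu_summable(1)[OF s g mu z]] by simp
  moreover have "(\<Sum>k. \<mu> ^ Suc k * g (s ^ Suc k * z)) = \<mu> * (\<Sum>k. \<mu> ^ k * g (s ^ k * (s * z)))"
    using suminf_mult[OF neu_summable(1)[OF s g mu sz], of \<mu>]
    by (simp add: mult.assoc mult.commute mult.left_commute)
  ultimately have e0: "(\<Sum>k. \<mu> ^ k * g (s ^ k * z)) - g z = \<mu> * (\<Sum>k. \<mu> ^ k * g (s ^ k * (s * z)))"
    by simp
  then have e: "(\<Sum>k. \<mu> ^ k * g (s ^ k * z)) = g z + \<mu> * (\<Sum>k. \<mu> ^ k * g (s ^ k * (s * z)))"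
    by (simp add: algebra_simps)
  then show ?thesis using z sz by (simp add: neu_def)
qed

lemma neu_bound:
  assumes s: "norm s = 1" and g: "g \<in> hol_disc" and mu: "norm \<mu> < 1" and \<rho>: "0 \<le> \<rho>" "\<rho> < 1"
    and z: "z \<in> cball 0 \<rho>"
  shows "norm (neu \<mu> s g z) \<le> sup_on \<rho> g / (1 - norm \<mu>)"
proof -
  have zb: "z \<in> ball 0 1" using z \<rho> by auto
  have sm: "summable (\<lambda>k. norm \<mu> ^ k * sup_on \<rho> g)"
    by (intro summable_mult2 summable_geometric) (use mu in auto)
  have "norm (neu \<mu> s g z) = norm (\<Sum>k. \<mu> ^ k * g (s ^ k * z))" using zb by (simp add: neu_def)
  also have "\<dots> \<le> (\<Sum>k. norm (\<mu> ^ k * g (s ^ k * z)))"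
    by (rule summable_norm[OF neu_summable(2)[OF s g mu zb]])
  also have "\<dots> \<le> (\<Sum>k. norm \<mu> ^ k * sup_on \<rho> g)"
    by (rule suminf_le[OF _ neu_summable(2)[OF s g mu zb] sm]) (use neu_term_bound[OF s g \<rho>(2) z] in auto)
  also have "\<dots> = sup_on \<rho> g / (1 - norm \<mu>)"
    using suminf_mult2[OF summable_geometric[of "norm \<mu>"], of "sup_on \<rho> g"] suminf_geometric[of "norm \<mu>"] mu
    by simp
  finally show ?thesis .
qed

lemma neu_hol:
  assumes s: "norm s = 1" and g: "g \<in> hol_disc" and mu: "norm \<mu> < 1"
  shows "neu \<mu> s g \<in> hol_disc"
proof -
  have "(\<lambda>z. \<Sum>k. \<mu> ^ k * g (s ^ k * z)) holomorphic_on ball 0 1"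
  proof (rule holomorphic_uniform_sequence[where f="\<lambda>n z. \<Sum>k<n. \<mu> ^ k * g (s ^ k * z)"])
    show "open (ball (0::complex) 1)" by simp
    fix n
    have "norm (s ^ k) = 1" for k using s by (simp add: norm_power)
    then show "(\<lambda>z. \<Sum>k<n. \<mu> ^ k * g (s ^ k * z)) holomorphic_on ball 0 1"
      by (intro holomorphic_intros rot_holo[OF _ g])
  next
    fix x :: complex assume x: "x \<in> ball 0 1"
    define d where "d = (1 - norm x) / 2"
    have d: "d > 0" using x by (simp add: d_def)
    have sub: "cball x d \<subseteq> ball 0 1"
    proof
      fix y assume "y \<in> cball x d"
      then have "norm y \<le> norm x + d" using norm_triangle_ineq2[of y x] by (simp add: dist_norm norm_minus_commute)
      moreover have "norm x < 1" using x by simp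
      ultimately have "norm y < 1" using d_def by (simp add: field_simps)
      then show "y \<in> ball 0 1" by simp
    qed
    define \<rho> where "\<rho> = norm x + d"
    have \<rho>: "\<rho> < 1" using x by (simp add: \<rho>_def d_def field_simps)
    have sub2: "cball x d \<subseteq> cball 0 \<rho>"
    proof
      fix y assume "y \<in> cball x d"
      then have "norm y \<le> norm x + d" using norm_triangle_ineq2[of y x] by (simp add: dist_norm norm_minus_commute)
      then show "y \<in> cball 0 \<rho>" by (simp add: \<rho>_def)
    qed
    have "uniform_limit (cball x d) (\<lambda>n z. \<Sum>k<n. \<mu> ^ k * g (s ^ k * z)) (\<lambda>z. \<Sum>k. \<mu> ^ k * g (s ^ k * z)) sequentially"
      by (rule Weierstrass_m_test[where M="\<lambda>k. norm \<mu> ^ k * sup_on \<rho> g"])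
         (use neu_term_bound[OF s g \<rho>] sub2 mu in \<open>auto intro!: summable_mult2 summable_geometric\<close>)
    then show "\<exists>d>0. cball x d \<subseteq> ball 0 1 \<and> uniform_limit (cball x d) (\<lambda>n z. \<Sum>k<n. \<mu> ^ k * g (s ^ k * z)) (\<lambda>z. \<Sum>k. \<mu> ^ k * g (s ^ k * z)) sequentially"
      using d sub by blast
  qed
  then have "neu \<mu> s g holomorphic_on ball 0 1" by (rule holomorphic_transform) (simp add: neu_def)
  then show ?thesis by (simp add: hol_disc_def neu_def)
qed

lemma neu_zero: "g 0 = 0 \<Longrightarrow> neu \<mu> s g 0 = 0"
  by (simp add: neu_def)

lemma X_cases:
  assumes X: "X = hol_disc \<or> X = hol0_disc" and h: "h \<in> hol_disc" and h0: "g \<in> X \<Longrightarrow> g 0 = 0 \<Longrightarrow> h 0 = 0" and g: "g \<in> X"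
  shows "h \<in> X"
proof (cases "X = hol_disc")
  case True then show ?thesis using h by simp
next
  case False
  then have "X = hol0_disc" using X by blast
  then show ?thesis using h g h0 by (simp add: hol0_disc_def)
qed

lemma rstar_big:
  assumes X: "X = hol_disc \<or> X = hol0_disc" and r: "norm r = 1" and l: "norm l > 1"
  shows "l \<in> resolvent_star X (comp_rot r)"
proof -
  define \<delta> where "\<delta> = (norm l - 1) / 2"
  define K where "K = 2 / (norm l - 1)"
  have lb: "norm l' - 1 \<ge> (norm l - 1) / 2" if "l' \<in> ball l \<delta>" for l'
  proof -
    have "norm (l - l') < \<delta>" using that by (simp add: dist_norm)
    moreover have "norm l - norm l' \<le> norm (l - l')" by (rule norm_triangle_ineq2)
    ultimately show ?thesis unfolding \<delta>_def by (simp add: field_simps)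
  qed
  show ?thesis
  proof (rule rstarI[where \<delta>=\<delta> and K=K])
    show "\<delta> > 0" using l by (simp add: \<delta>_def)
    fix l' assume l': "l' \<in> ball l \<delta>"
    have l'1: "norm l' > 1" using lb[OF l'] l by (simp add: field_simps)
    then have l'0: "l' \<noteq> 0" by auto
    show "inj_on (shift_op l' (comp_rot r)) X"
    proof (rule inj_shift[OF X r])
      fix n show "l' \<noteq> r ^ n" using l'1 r by (auto simp: norm_power)
    qed
    fix g assume g: "g \<in> X"
    have gh: "g \<in> hol_disc" using XD[OF X g] .
    define \<mu> where "\<mu> = 1 / l'"
    have mu: "norm \<mu> < 1" using l'1 by (auto simp: \<mu>_def norm_divide divide_simps)
    define N where "N = neu \<mu> r g"
    have Nh: "N \<in> hol_disc" unfolding N_def by (rule neu_hol[OF r gh mu])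
    define h where "h = (\<lambda>z. N z / l')"
    have hh: "h \<in> hol_disc"
      using Nh by (auto simp: hol_disc_def h_def intro: holomorphic_intros)
    have "h \<in> X"
      by (rule X_cases[OF X hh _ g]) (simp add: h_def N_def neu_zero)
    moreover have "shift_op l' (comp_rot r) h = g"
    proof
      fix z
      show "shift_op l' (comp_rot r) h z = g z"
      proof (cases "z \<in> ball 0 1")
        case False
        then show ?thesis using hol_discD(2)[OF gh False] hol_discD(2)[OF hh False] by (simp add: shift_op_def comp_rot_def)
      next
        case True
        have "shift_op l' (comp_rot r) h z = N z - \<mu> * N (r * z)"
          using True l'0 by (simp add: shift_op_def comp_rot_def h_def \<mu>_def diff_divide_distrib)
        also have "\<dots> = g z" using neu_rec[OF r gh mu True] by (simp add: N_def)
        finally show ?thesis .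
      qed
    qed
    moreover have "\<forall>\<rho>\<in>{0<..<1}. sup_on \<rho> h \<le> K * sup_on \<rho> g"
    proof
      fix \<rho> :: real assume \<rho>: "\<rho> \<in> {0<..<1}"
      have S0: "0 \<le> sup_on \<rho> g" using sup_on_nonneg[OF gh] \<rho> by auto
      show "sup_on \<rho> h \<le> K * sup_on \<rho> g"
      proof (rule sup_on_le)
        show "0 \<le> \<rho>" using \<rho> by simp
        fix z :: complex assume z: "z \<in> cball 0 \<rho>"
        have "norm (h z) = norm (N z) / norm l'" by (simp add: h_def norm_divide)
        also have "\<dots> \<le> (sup_on \<rho> g / (1 - norm \<mu>)) / norm l'"
          by (rule divide_right_mono[OF _ norm_ge_zero]) (use neu_bound[OF r gh mu _ _ z] \<rho> in \<open>auto simp: N_def\<close>)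
        also have "\<dots> = sup_on \<rho> g / (norm l' - 1)"
          using l'1 l'0 by (simp add: \<mu>_def norm_divide field_simps)
        also have "\<dots> \<le> sup_on \<rho> g / ((norm l - 1) / 2)"
          by (rule divide_left_mono[OF lb[OF l'] S0]) (use l l'1 in auto)
        also have "\<dots> = K * sup_on \<rho> g" by (simp add: K_def)
        finally show "norm (h z) \<le> K * sup_on \<rho> g" .
      qed
    qed
    ultimately show "\<exists>h\<in>X. shift_op l' (comp_rot r) h = g \<and> (\<forall>\<rho>\<in>{0<..<1}. sup_on \<rho> h \<le> K * sup_on \<rho> g)"
      by blast
  next
    fix l' f assume "f \<in> X" then show "shift_op l' (comp_rot r) f \<in> X" using shift_X[OF X r] by blast
  qed
qed

lemma rstar_small:
  assumes X: "X = hol_disc \<or> X = hol0_disc" and r: "norm r = 1" and l: "norm l < 1"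
  shows "l \<in> resolvent_star X (comp_rot r)"
proof -
  define s where "s = cnj r"
  have s: "norm s = 1" using r by (simp add: s_def)
  have sr: "s * (r * z) = z" for z
  proof -
    have "cnj r * r = 1" using complex_norm_square[of r] r by (simp add: mult.commute)
    then show ?thesis by (simp add: s_def mult.assoc[symmetric])
  qed
  define \<delta> where "\<delta> = (1 - norm l) / 2"
  define K where "K = 2 / (1 - norm l)"
  have lb: "1 - norm l' \<ge> (1 - norm l) / 2" if "l' \<in> ball l \<delta>" for l'
  proof -
    have "norm (l' - l) < \<delta>" using that by (simp add: dist_norm norm_minus_commute)
    moreover have "norm l' - norm l \<le> norm (l' - l)" by (rule norm_triangle_ineq2)
    ultimately show ?thesis unfolding \<delta>_def by (simp add: field_simps)
  qed
  show ?thesis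
  proof (rule rstarI[where \<delta>=\<delta> and K=K])
    show "\<delta> > 0" using l by (simp add: \<delta>_def)
    fix l' assume l': "l' \<in> ball l \<delta>"
    have mu: "norm l' < 1" using lb[OF l'] l by (simp add: field_simps)
    show "inj_on (shift_op l' (comp_rot r)) X"
    proof (rule inj_shift[OF X r])
      fix n show "l' \<noteq> r ^ n" using mu r by (auto simp: norm_power)
    qed
    fix g assume g: "g \<in> X"
    have gh: "g \<in> hol_disc" using XD[OF X g] .
    define N where "N = neu l' s g"
    have Nh: "N \<in> hol_disc" unfolding N_def by (rule neu_hol[OF s gh mu])
    define h where "h = (\<lambda>z. - comp_rot s N z)"
    have hh: "h \<in> hol_disc"
      using comp_rot_hol[OF s Nh] by (auto simp: hol_disc_def h_def intro: holomorphic_intros)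
    have "h \<in> X"
      by (rule X_cases[OF X hh _ g]) (simp add: h_def N_def neu_zero comp_rot_def)
    moreover have "shift_op l' (comp_rot r) h = g"
    proof
      fix z
      show "shift_op l' (comp_rot r) h z = g z"
      proof (cases "z \<in> ball 0 1")
        case False
        then show ?thesis using hol_discD(2)[OF gh False] by (simp add: shift_op_def comp_rot_def h_def)
      next
        case True
        have rz: "r * z \<in> ball 0 1" using rot_in_ball[OF r True] .
        have "shift_op l' (comp_rot r) h z = N z - l' * N (s * z)"
          using True rz by (simp add: shift_op_def comp_rot_def h_def sr)
        also have "\<dots> = g z" using neu_rec[OF s gh mu True] by (simp add: N_def)
        finally show ?thesis .
      qed
    qed
    moreover have "\<forall>\<rho>\<in>{0<..<1}. sup_on \<rho> h \<le> K * sup_on \<rho> g"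
    proof
      fix \<rho> :: real assume \<rho>: "\<rho> \<in> {0<..<1}"
      have S0: "0 \<le> sup_on \<rho> g" using sup_on_nonneg[OF gh] \<rho> by auto
      show "sup_on \<rho> h \<le> K * sup_on \<rho> g"
      proof (rule sup_on_le)
        show "0 \<le> \<rho>" using \<rho> by simp
        fix z :: complex assume z: "z \<in> cball 0 \<rho>"
        have zb: "z \<in> ball 0 1" using z \<rho> by auto
        have sz: "s * z \<in> cball 0 \<rho>" using z s by (simp add: norm_mult)
        have "norm (h z) = norm (N (s * z))" using zb by (simp add: h_def comp_rot_def)
        also have "\<dots> \<le> sup_on \<rho> g / (1 - norm l')"
          using neu_bound[OF s gh mu _ _ sz] \<rho> by (auto simp: N_def)
        also have "\<dots> \<le> sup_on \<rho> g / ((1 - norm l) / 2)"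
          by (rule divide_left_mono[OF lb[OF l'] S0]) (use l mu in auto)
        also have "\<dots> = K * sup_on \<rho> g" by (simp add: K_def)
        finally show "norm (h z) \<le> K * sup_on \<rho> g" .
      qed
    qed
    ultimately show "\<exists>h\<in>X. shift_op l' (comp_rot r) h = g \<and> (\<forall>\<rho>\<in>{0<..<1}. sup_on \<rho> h \<le> K * sup_on \<rho> g)"
      by blast
  next
    fix l' f assume "f \<in> X" then show "shift_op l' (comp_rot r) f \<in> X" using shift_X[OF X r] by blast
  qed
qed

lemma rstar_off:
  assumes X: "X = hol_disc \<or> X = hol0_disc" and r: "norm r = 1" and l: "norm l \<noteq> 1"
  shows "l \<in> resolvent_star X (comp_rot r)"
  using rstar_big[OF X r] rstar_small[OF X r] l by (cases "norm l > 1") auto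

lemma point_sub_spec: "point_spec X T \<subseteq> spec X T"
  by (auto simp: point_spec_def spec_def resolvent_set_def bij_betw_def)

lemma spec_sub_w: "spec X T \<subseteq> waelbroeck_spec X T"
proof
  fix l assume l: "l \<in> spec X T"
  show "l \<in> waelbroeck_spec X T"
  proof (rule ccontr)
    assume "l \<notin> waelbroeck_spec X T"
    then obtain \<delta> where "\<delta> > 0" "ball l \<delta> \<subseteq> resolvent_set X T"
      by (auto simp: waelbroeck_spec_def resolvent_star_def)
    then have "l \<in> resolvent_set X T" by auto
    then show False using l by (simp add: spec_def)
  qed
qed

lemma equicont_mono: "equicont_ops X A \<Longrightarrow> B \<subseteq> A \<Longrightarrow> equicont_ops X B"
  unfolding equicont_ops_def by (meson subsetD)

lemma open_rstar: "open (resolvent_star X T)"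
proof (rule openI)
  fix l assume "l \<in> resolvent_star X T"
  then obtain \<delta> where d: "\<delta> > 0" "ball l \<delta> \<subseteq> resolvent_set X T"
    "equicont_ops X (resolvent_op X T ` ball l \<delta>)"
    unfolding resolvent_star_def by blast
  have "ball l \<delta> \<subseteq> resolvent_star X T"
  proof
    fix l' assume l': "l' \<in> ball l \<delta>"
    define \<delta>' where "\<delta>' = \<delta> - dist l l'"
    have dpos: "\<delta>' > 0" using l' by (simp add: \<delta>'_def)
    have sub: "ball l' \<delta>' \<subseteq> ball l \<delta>"
    proof
      fix x assume "x \<in> ball l' \<delta>'"
      then have "dist l' x < \<delta> - dist l l'" by (simp add: \<delta>'_def)
      then have "dist l x < \<delta>" using dist_triangle[of l x l'] by linarith
      then show "x \<in> ball l \<delta>" by simp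
    qed
    have "resolvent_op X T ` ball l' \<delta>' \<subseteq> resolvent_op X T ` ball l \<delta>"
      using sub by (rule image_mono)
    then have eq: "equicont_ops X (resolvent_op X T ` ball l' \<delta>')" by (rule equicont_mono[OF d(3)])
    have rs: "ball l' \<delta>' \<subseteq> resolvent_set X T" using sub d(2) by (rule order_trans)
    show "l' \<in> resolvent_star X T"
      unfolding resolvent_star_def using dpos rs eq by blast
  qed
  then show "\<exists>e>0. ball l e \<subseteq> resolvent_star X T" using d by blast
qed

lemma closed_w: "closed (waelbroeck_spec X T)"
proof -
  have "- (UNIV - resolvent_star X T) = resolvent_star X T" by blast
  then show ?thesis unfolding waelbroeck_spec_def closed_def using open_rstar by simp
qed

lemma closure_spec_sub_w: "closure (spec X T) \<subseteq> waelbroeck_spec X T"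
  by (rule closure_minimal[OF spec_sub_w closed_w])

lemma point_spec_hol:
  assumes r: "norm r = 1"
  shows "point_spec hol_disc (comp_rot r) = {r ^ n | n. True}"
proof
  show "point_spec hol_disc (comp_rot r) \<subseteq> {r ^ n | n. True}"
    using point_spec_iff[of hol_disc r] r eigen_value[OF r] by blast
  show "{r ^ n | n. True} \<subseteq> point_spec hol_disc (comp_rot r)"
    using point_spec_iff[of hol_disc r] r mono_fn_hol mono_fn_nz mono_fn_eigen[OF r] by blast
qed

lemma point_spec_hol0:
  assumes r: "norm r = 1"
  shows "point_spec hol0_disc (comp_rot r) = {r ^ n | n. n \<ge> 1}"
proof
  show "point_spec hol0_disc (comp_rot r) \<subseteq> {r ^ n | n. n \<ge> 1}"
  proof
    fix l assume "l \<in> point_spec hol0_disc (comp_rot r)"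
    then obtain f where f: "f \<in> hol0_disc" "f \<noteq> (\<lambda>z. 0)" "shift_op l (comp_rot r) f = (\<lambda>z. 0)"
      using point_spec_iff[of hol0_disc r] r by blast
    then have "f \<in> hol_disc" "f 0 = 0" by (auto simp: hol0_disc_def)
    then show "l \<in> {r ^ n | n. n \<ge> 1}" using eigen_value[OF r _ f(2,3)] by blast
  qed
  show "{r ^ n | n. n \<ge> 1} \<subseteq> point_spec hol0_disc (comp_rot r)"
    using point_spec_iff[of hol0_disc r] r mono_fn_hol0 mono_fn_nz mono_fn_eigen[OF r] by blast
qed

lemma w_sub_sphere:
  assumes X: "X = hol_disc \<or> X = hol0_disc" and r: "norm r = 1"
  shows "waelbroeck_spec X (comp_rot r) \<subseteq> sphere 0 1"
proof
  fix l assume "l \<in> waelbroeck_spec X (comp_rot r)"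
  then have "l \<notin> resolvent_star X (comp_rot r)" by (simp add: waelbroeck_spec_def)
  then have "norm l = 1" using rstar_off[OF X r] by blast
  then show "l \<in> sphere 0 1" by simp
qed

lemma dense_powers:
  fixes r :: complex
  assumes r: "norm r = 1" and nr: "\<forall>m::nat. m > 0 \<longrightarrow> r ^ m \<noteq> 1"
  shows "sphere 0 1 \<subseteq> closure {r ^ n | n. n \<ge> 1}"
proof
  fix w :: complex assume w: "w \<in> sphere 0 1"
  have cisA: "cis (Arg z) = z" if "norm z = 1" for z
  proof -
    have "z \<noteq> 0" using that by auto
    then show ?thesis using cis_Arg[of z] that by (simp add: sgn_div_norm)
  qed
  define \<theta> where "\<theta> = Arg r / (2 * pi)"
  have r\<theta>: "r ^ n = cis (2 * pi * (real n * \<theta>))" for n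
    using cisA[OF r] Complex.DeMoivre[of "Arg r" n] by (simp add: \<theta>_def)
  have irr: "\<theta> \<notin> \<rat>"
  proof
    assume "\<theta> \<in> \<rat>"
    then obtain a b where ab: "b > 0" "\<theta> = of_int a / of_int b" by (auto elim: Rats_cases')
    have "real (nat b) * \<theta> = of_int a" using ab by (simp add: field_simps)
    then have "r ^ nat b = 1" using r\<theta>[of "nat b"] by simp
    then show False using nr ab(1) by auto
  qed
  define \<alpha> where "\<alpha> = Arg w / (2 * pi)"
  have w\<alpha>: "w = cis (2 * pi * \<alpha>)" using cisA[of w] w by (simp add: \<alpha>_def)
  show "w \<in> closure {r ^ n | n. n \<ge> 1}"
    unfolding closure_approachable
  proof (intro allI impI)
    fix e :: real assume e: "e > 0"
    have "continuous_on UNIV (\<lambda>t. cis (2 * pi * t))" by (intro continuous_intros)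
    then have "continuous (at \<alpha>) (\<lambda>t. cis (2 * pi * t))"
      by (simp add: continuous_on_eq_continuous_at)
    then obtain d where d: "d > 0" "\<And>t. dist t \<alpha> < d \<Longrightarrow> dist (cis (2 * pi * t)) (cis (2 * pi * \<alpha>)) < e"
      using e unfolding continuous_at_eps_delta by blast
    obtain h k where hk: "k > 0" "\<bar>of_int k * \<theta> - of_int h - \<alpha>\<bar> < d"
      using sequence_of_fractional_parts_is_dense[OF irr d(1)] by blast
    have "dist (cis (2 * pi * (of_int k * \<theta> - of_int h))) w < e"
      using d(2)[of "of_int k * \<theta> - of_int h"] hk(2) w\<alpha> by (simp add: dist_real_def)
    moreover have "cis (2 * pi * (of_int k * \<theta> - of_int h)) = r ^ nat k"
    proof -
      have "r ^ nat k = cis (2 * pi * (of_int k * \<theta> - of_int h) + 2 * pi * of_int h)"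
        using r\<theta>[of "nat k"] hk(1) by (simp add: algebra_simps)
      also have "\<dots> = cis (2 * pi * (of_int k * \<theta> - of_int h)) * cis (2 * pi * of_int h)"
        by (rule cis_mult[symmetric])
      also have "cis (2 * pi * of_int h) = 1" by (rule cis_multiple_2pi) simp
      finally show ?thesis by simp
    qed
    moreover have "nat k \<ge> 1" using hk(1) by simp
    ultimately have "r ^ nat k \<in> {r ^ n | n. n \<ge> 1}" "dist (r ^ nat k) w < e" by auto
    then show "\<exists>y\<in>{r ^ n | n. n \<ge> 1}. dist y w < e" by blast
  qed
qed

lemma pow_mod: "(r::complex) ^ m = 1 \<Longrightarrow> r ^ n = r ^ (n mod m)"
proof -
  assume rm: "r ^ m = 1"
  have "r ^ n = r ^ (m * (n div m) + n mod m)" by simp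
  also have "\<dots> = (r ^ m) ^ (n div m) * r ^ (n mod m)" unfolding power_add power_mult ..
  finally show ?thesis using rm by simp
qed

lemma roots_eq:
  fixes r :: complex
  assumes m: "m > 0" and rm: "r ^ m = 1" and prim: "\<forall>k. 0 < k \<and> k < m \<longrightarrow> r ^ k \<noteq> 1"
  shows "{z. z ^ m = 1} = {r ^ j | j. j < m}"
proof -
  have r0: "r \<noteq> 0" using rm m by (auto simp: zero_power)
  have img: "{r ^ j | j. j < m} = (\<lambda>j. r ^ j) ` {..<m}" by auto
  have inj: "inj_on (\<lambda>j. r ^ j) {..<m}"
  proof (rule inj_onI)
    have *: "i = j" if "r ^ i = r ^ j" "i < m" "j < m" "i \<le> j" for i j
    proof (rule ccontr)
      assume "i \<noteq> j"
      have "r ^ j = r ^ i * r ^ (j - i)" using that(4) by (simp add: power_add[symmetric])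
      then have "r ^ (j - i) = 1" using that(1) r0 by simp
      then show False using prim \<open>i \<noteq> j\<close> that by auto
    qed
    fix i j assume "i \<in> {..<m}" "j \<in> {..<m}" "r ^ i = r ^ j"
    then show "i = j" using *[of i j] *[of j i] by (cases "i \<le> j") auto
  qed
  have sub: "{r ^ j | j. j < m} \<subseteq> {z. z ^ m = 1}"
  proof
    fix z assume "z \<in> {r ^ j | j. j < m}"
    then obtain j where "z = r ^ j" by blast
    then have "z ^ m = (r ^ m) ^ j" by (simp add: power_mult[symmetric] mult.commute)
    then show "z \<in> {z. z ^ m = 1}" using rm by simp
  qed
  have "card {r ^ j | j. j < m} = m" unfolding img using card_image[OF inj] by simp
  also have "\<dots> = card {z::complex. z ^ m = 1}" using card_roots_unity_eq[OF m] by simp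
  finally show ?thesis
    by (intro card_subset_eq[OF _ sub, symmetric] finite_roots_unity) (use m in auto)
qed

lemma R_eq1:
  fixes r :: complex
  assumes m: "m > 0" and rm: "r ^ m = 1"
  shows "{r ^ n | n. True} = {r ^ j | j. j < m}"
proof
  show "{r ^ n | n. True} \<subseteq> {r ^ j | j. j < m}"
  proof
    fix z assume "z \<in> {r ^ n | n. True}"
    then obtain n where "z = r ^ n" by blast
    then have "z = r ^ (n mod m)" "n mod m < m" using pow_mod[OF rm] m by auto
    then show "z \<in> {r ^ j | j. j < m}" by blast
  qed
qed auto

lemma R_eq2:
  fixes r :: complex
  assumes m: "m > 0" and rm: "r ^ m = 1"
  shows "{r ^ n | n. n \<ge> 1} = {r ^ j | j. j < m}"
proof
  show "{r ^ n | n. n \<ge> 1} \<subseteq> {r ^ j | j. j < m}"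
    using R_eq1[OF m rm] by blast
  show "{r ^ j | j. j < m} \<subseteq> {r ^ n | n. n \<ge> 1}"
  proof
    fix z assume "z \<in> {r ^ j | j. j < m}"
    then obtain j where j: "z = r ^ j" by blast
    have "r ^ (j + m) = r ^ j" using rm by (simp add: power_add)
    then show "z \<in> {r ^ n | n. n \<ge> 1}" using j m by (intro CollectI exI[where x="j + m"]) auto
  qed
qed

lemma w_root:
  assumes X: "X = hol_disc \<or> X = hol0_disc" and r: "norm r = 1"
    and m: "m > 0" and rm: "r ^ m = 1" and prim: "\<forall>k. 0 < k \<and> k < m \<longrightarrow> r ^ k \<noteq> 1"
  shows "waelbroeck_spec X (comp_rot r) \<subseteq> {r ^ j | j. j < m}"
proof
  fix l assume l: "l \<in> waelbroeck_spec X (comp_rot r)"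
  show "l \<in> {r ^ j | j. j < m}"
  proof (rule ccontr)
    assume "l \<notin> {r ^ j | j. j < m}"
    then have "l ^ m \<noteq> 1" using roots_eq[OF m rm prim] by blast
    then have "l \<in> resolvent_star X (comp_rot r)" by (rule rstar_root[OF X r rm])
    then show False using l by (simp add: waelbroeck_spec_def)
  qed
qed

lemma infdim:
  assumes X: "X = hol_disc \<or> X = hol0_disc" and r: "norm r = 1"
    and m: "m > 0" and rm: "r ^ m = 1"
  shows "infinite_dimensional (kernel_of X (shift_op (r ^ j) (comp_rot r)))"
  unfolding infinite_dimensional_def
proof
  fix n
  define e where "e = (\<lambda>i::nat. j + Suc i * m)"
  have e1: "e i \<ge> 1" for i using m by (simp add: e_def)
  have einj: "e i = e k \<longleftrightarrow> i = k" for i k using m by (simp add: e_def)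
  have re: "r ^ e i = r ^ j" for i
  proof -
    have "r ^ e i = r ^ j * r ^ (m * Suc i)" unfolding e_def power_add by (simp add: mult.commute)
    also have "\<dots> = r ^ j * (r ^ m) ^ Suc i" by (simp only: power_mult)
    finally have "r ^ e i = r ^ j * (r ^ m) ^ Suc i" .
    then show ?thesis using rm by simp
  qed
  define fs where "fs = (\<lambda>i. mono_fn (e i))"
  have "\<forall>i<n. fs i \<in> kernel_of X (shift_op (r ^ j) (comp_rot r))"
  proof (intro allI impI)
    fix i
    have "mono_fn (e i) \<in> X" using X mono_fn_hol mono_fn_hol0[OF e1] by auto
    then show "fs i \<in> kernel_of X (shift_op (r ^ j) (comp_rot r))"
      using mono_fn_eigen[OF r re[of i]] by (simp add: kernel_of_def fs_def)
  qed
  moreover have "\<forall>c. (\<lambda>z. \<Sum>i<n. c i * fs i z) = (\<lambda>z. 0) \<longrightarrow> (\<forall>i<n. c i = 0)"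
  proof (intro allI impI)
    fix c :: "nat \<Rightarrow> complex" and k
    assume H: "(\<lambda>z. \<Sum>i<n. c i * fs i z) = (\<lambda>z. 0)" and k: "k < n"
    define p where "p = (\<Sum>i<n. monom (c i) (e i))"
    have pz: "poly p z = 0" if "z \<in> ball 0 1" for z
    proof -
      have "poly p z = (\<Sum>i<n. c i * fs i z)"
        using that by (simp add: p_def poly_sum poly_monom fs_def mono_fn_def)
      then show ?thesis using fun_cong[OF H, of z] by simp
    qed
    have "p = 0"
    proof (rule ccontr)
      assume "p \<noteq> 0"
      then have "finite {x. poly p x = 0}" by (rule poly_roots_finite)
      moreover have "ball (0::complex) 1 \<subseteq> {x. poly p x = 0}" using pz by auto
      ultimately have "finite (ball (0::complex) 1)" by (rule finite_subset[rotated])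
      then have "ball (0::complex) 1 = {}" by (rule finite_imp_not_open) simp
      then show False by simp
    qed
    have "coeff p (e k) = (\<Sum>i<n. if e i = e k then c i else 0)"
      by (simp add: p_def coeff_sum)
    also have "\<dots> = (\<Sum>i<n. if i = k then c i else 0)"
      by (intro sum.cong refl) (simp add: einj)
    also have "\<dots> = c k" using k by simp
    finally show "c k = 0" using \<open>p = 0\<close> by simp
  qed
  ultimately show "\<exists>fs. (\<forall>i<n. fs i \<in> kernel_of X (shift_op (r ^ j) (comp_rot r))) \<and>
      (\<forall>c. (\<lambda>z. \<Sum>i<n. c i * fs i z) = (\<lambda>z. 0) \<longrightarrow> (\<forall>i<n. c i = 0))" by blast
qed

theorem mainTheorem1:
  fixes r :: complex
  assumes "norm r = 1"
  shows
   "point_spec hol_disc (comp_rot r) = {r ^ n | n. True} \<and>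
    waelbroeck_spec hol_disc (comp_rot r) \<subseteq> sphere 0 1 \<and>
    waelbroeck_spec hol0_disc (comp_rot r) \<subseteq> sphere 0 1 \<and>
    (\<forall>m::nat. m > 0 \<and> r ^ m = 1 \<and> (\<forall>k. 0 < k \<and> k < m \<longrightarrow> r ^ k \<noteq> 1) \<longrightarrow>
      spec hol_disc (comp_rot r) = {r ^ j | j. j < m} \<and>
      waelbroeck_spec hol_disc (comp_rot r) = {r ^ j | j. j < m} \<and>
      point_spec hol_disc (comp_rot r) = {r ^ j | j. j < m} \<and>
      (\<forall>j<m. infinite_dimensional (kernel_of hol_disc (shift_op (r ^ j) (comp_rot r)))) \<and>
      spec hol0_disc (comp_rot r) = {r ^ j | j. j < m} \<and>
      waelbroeck_spec hol0_disc (comp_rot r) = {r ^ j | j. j < m} \<and>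
      point_spec hol0_disc (comp_rot r) = {r ^ j | j. j < m} \<and>
      (\<forall>j<m. infinite_dimensional (kernel_of hol0_disc (shift_op (r ^ j) (comp_rot r))))) \<and>
    ((\<forall>m::nat. m > 0 \<longrightarrow> r ^ m \<noteq> 1) \<longrightarrow>
      point_spec hol0_disc (comp_rot r) = {r ^ n | n. n \<ge> 1} \<and>
      closure (spec hol0_disc (comp_rot r)) = sphere 0 1 \<and>
      waelbroeck_spec hol0_disc (comp_rot r) = sphere 0 1 \<and>
      waelbroeck_spec hol_disc (comp_rot r) = sphere 0 1)"
proof -
  have Xh: "hol_disc = hol_disc \<or> hol_disc = hol0_disc" by simp
  have X0: "hol0_disc = hol_disc \<or> hol0_disc = hol0_disc" by simp
  have A: "point_spec hol_disc (comp_rot r) = {r ^ n | n. True}" by (rule point_spec_hol[OF assms])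
  have B: "waelbroeck_spec hol_disc (comp_rot r) \<subseteq> sphere 0 1" by (rule w_sub_sphere[OF Xh assms])
  have C: "waelbroeck_spec hol0_disc (comp_rot r) \<subseteq> sphere 0 1" by (rule w_sub_sphere[OF X0 assms])
  have P0: "point_spec hol0_disc (comp_rot r) = {r ^ n | n. n \<ge> 1}" by (rule point_spec_hol0[OF assms])
  have D: "spec X (comp_rot r) = {r ^ j | j. j < m} \<and>
      waelbroeck_spec X (comp_rot r) = {r ^ j | j. j < m} \<and>
      point_spec X (comp_rot r) = {r ^ j | j. j < m} \<and>
      (\<forall>j<m. infinite_dimensional (kernel_of X (shift_op (r ^ j) (comp_rot r))))"
    if X: "X = hol_disc \<or> X = hol0_disc" and m: "m > 0" and rm: "r ^ m = 1"
      and prim: "\<forall>k. 0 < k \<and> k < m \<longrightarrow> r ^ k \<noteq> 1" for X m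
  proof -
    have P: "point_spec X (comp_rot r) = {r ^ j | j. j < m}"
    proof (cases "X = hol_disc")
      case True
      then show ?thesis using A R_eq1[OF m rm] by simp
    next
      case False
      then have "X = hol0_disc" using X by blast
      then show ?thesis using P0 R_eq2[OF m rm] by simp
    qed
    have W: "waelbroeck_spec X (comp_rot r) \<subseteq> {r ^ j | j. j < m}" by (rule w_root[OF X assms m rm prim])
    have S1: "point_spec X (comp_rot r) \<subseteq> spec X (comp_rot r)" by (rule point_sub_spec)
    have S2: "spec X (comp_rot r) \<subseteq> waelbroeck_spec X (comp_rot r)" by (rule spec_sub_w)
    have e1: "spec X (comp_rot r) = {r ^ j | j. j < m}"
      by (rule antisym[OF order_trans[OF S2 W]]) (simp only: P[symmetric] S1)
    have e2: "waelbroeck_spec X (comp_rot r) = {r ^ j | j. j < m}"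
      by (rule antisym[OF W]) (rule order_trans[OF _ S2], simp only: e1 order_refl)
    have e4: "\<forall>j<m. infinite_dimensional (kernel_of X (shift_op (r ^ j) (comp_rot r)))"
      using infdim[OF X assms m rm] by simp
    show ?thesis by (intro conjI e1 e2 P e4)
  qed
  have F4: "\<forall>m::nat. m > 0 \<and> r ^ m = 1 \<and> (\<forall>k. 0 < k \<and> k < m \<longrightarrow> r ^ k \<noteq> 1) \<longrightarrow>
      spec hol_disc (comp_rot r) = {r ^ j | j. j < m} \<and>
      waelbroeck_spec hol_disc (comp_rot r) = {r ^ j | j. j < m} \<and>
      point_spec hol_disc (comp_rot r) = {r ^ j | j. j < m} \<and>
      (\<forall>j<m. infinite_dimensional (kernel_of hol_disc (shift_op (r ^ j) (comp_rot r)))) \<and>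
      spec hol0_disc (comp_rot r) = {r ^ j | j. j < m} \<and>
      waelbroeck_spec hol0_disc (comp_rot r) = {r ^ j | j. j < m} \<and>
      point_spec hol0_disc (comp_rot r) = {r ^ j | j. j < m} \<and>
      (\<forall>j<m. infinite_dimensional (kernel_of hol0_disc (shift_op (r ^ j) (comp_rot r))))"
  proof (intro allI impI)
    fix m :: nat
    assume H: "m > 0 \<and> r ^ m = 1 \<and> (\<forall>k. 0 < k \<and> k < m \<longrightarrow> r ^ k \<noteq> 1)"
    have m: "m > 0" using H by simp
    have rm: "r ^ m = 1" using H by simp
    have prim: "\<forall>k. 0 < k \<and> k < m \<longrightarrow> r ^ k \<noteq> 1" using H by simp
    note Dh = D[OF Xh m rm prim] and D0 = D[OF X0 m rm prim]
    note h1 = conjunct1[OF Dh] and h2 = conjunct1[OF conjunct2[OF Dh]]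
      and h3 = conjunct1[OF conjunct2[OF conjunct2[OF Dh]]] and h4 = conjunct2[OF conjunct2[OF conjunct2[OF Dh]]]
    note k1 = conjunct1[OF D0] and k2 = conjunct1[OF conjunct2[OF D0]]
      and k3 = conjunct1[OF conjunct2[OF conjunct2[OF D0]]] and k4 = conjunct2[OF conjunct2[OF conjunct2[OF D0]]]
    show "spec hol_disc (comp_rot r) = {r ^ j | j. j < m} \<and>
      waelbroeck_spec hol_disc (comp_rot r) = {r ^ j | j. j < m} \<and>
      point_spec hol_disc (comp_rot r) = {r ^ j | j. j < m} \<and>
      (\<forall>j<m. infinite_dimensional (kernel_of hol_disc (shift_op (r ^ j) (comp_rot r)))) \<and>
      spec hol0_disc (comp_rot r) = {r ^ j | j. j < m} \<and>
      waelbroeck_spec hol0_disc (comp_rot r) = {r ^ j | j. j < m} \<and>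
      point_spec hol0_disc (comp_rot r) = {r ^ j | j. j < m} \<and>
      (\<forall>j<m. infinite_dimensional (kernel_of hol0_disc (shift_op (r ^ j) (comp_rot r))))"
      by (intro conjI h1 h2 h3 h4 k1 k2 k3 k4)
  qed
  have F5: "(\<forall>m::nat. m > 0 \<longrightarrow> r ^ m \<noteq> 1) \<longrightarrow>
      point_spec hol0_disc (comp_rot r) = {r ^ n | n. n \<ge> 1} \<and>
      closure (spec hol0_disc (comp_rot r)) = sphere 0 1 \<and>
      waelbroeck_spec hol0_disc (comp_rot r) = sphere 0 1 \<and>
      waelbroeck_spec hol_disc (comp_rot r) = sphere 0 1"
  proof (intro impI)
    assume nr: "\<forall>m::nat. m > 0 \<longrightarrow> r ^ m \<noteq> 1"
    have dens: "sphere 0 1 \<subseteq> closure {r ^ n | n. n \<ge> 1}" by (rule dense_powers[OF assms nr])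
    have s0: "point_spec hol0_disc (comp_rot r) \<subseteq> spec hol0_disc (comp_rot r)" by (rule point_sub_spec)
    have s1: "point_spec hol_disc (comp_rot r) \<subseteq> spec hol_disc (comp_rot r)" by (rule point_sub_spec)
    have sub01: "{r ^ n | n. n \<ge> 1} \<subseteq> {r ^ n | n. True}" by blast
    have c0: "closure {r ^ n | n. n \<ge> 1} \<subseteq> closure (spec hol0_disc (comp_rot r))"
      by (rule closure_mono) (simp only: P0[symmetric] s0)
    have c1: "closure {r ^ n | n. n \<ge> 1} \<subseteq> closure (spec hol_disc (comp_rot r))"
      by (rule closure_mono, rule order_trans[OF sub01], simp only: A[symmetric] s1)
    have w0: "closure (spec hol0_disc (comp_rot r)) \<subseteq> waelbroeck_spec hol0_disc (comp_rot r)"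
      by (rule closure_spec_sub_w)
    have w1: "closure (spec hol_disc (comp_rot r)) \<subseteq> waelbroeck_spec hol_disc (comp_rot r)"
      by (rule closure_spec_sub_w)
    have g1: "closure (spec hol0_disc (comp_rot r)) = sphere 0 1"
      by (rule antisym[OF order_trans[OF w0 C] order_trans[OF dens c0]])
    have g2: "waelbroeck_spec hol0_disc (comp_rot r) = sphere 0 1"
      by (rule antisym[OF C order_trans[OF order_trans[OF dens c0] w0]])
    have g3: "waelbroeck_spec hol_disc (comp_rot r) = sphere 0 1"
      by (rule antisym[OF B order_trans[OF order_trans[OF dens c1] w1]])
    show "point_spec hol0_disc (comp_rot r) = {r ^ n | n. n \<ge> 1} \<and>
      closure (spec hol0_disc (comp_rot r)) = sphere 0 1 \<and>
      waelbroeck_spec hol0_disc (comp_rot r) = sphere 0 1 \<and>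
      waelbroeck_spec hol_disc (comp_rot r) = sphere 0 1"
      by (intro conjI P0 g1 g2 g3)
  qed
  show ?thesis by (intro conjI A B C F4 F5)
qed

end
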